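(* Let $\Omega$ be a $D$-dimensional vector space over a finite field $\mathbb F$, $q=\sqrt{|\mathbb F|}$, and $\lambda\in\mathbb C\setminus\{0\}$. There is a unique $U_q(\mathfrak{sl}_2)$-module structure on $\mathbb C^{\mathcal L(\Omega)}$ such that for all $x\in\mathcal L(\Omega)$: $Ex=\lambda q^{-D}\sum_{x'\subset\mathrel{\cdot} x}x'$, $Fx=\lambda^{-1}q\sum_{x\subset\mathrel{\cdot} x'}x'$, $K^{\pm1}x=q^{\pm(D-2\dim x)}x$.
   Context: $\mathcal L(\Omega)$ is the set of all subspaces of $\Omega$, and $\mathbb C^{\mathcal L(\Omega)}$ is the complex vector space with basis $\mathcal L(\Omega)$. For subspaces $x,x'$, $x'\subset\mathrel{\cdot} x$ means $x'\subseteq x$ and $\dim x'=\dim x-1$ (covering relation). $U_q(\mathfrak{sl}_2)$ is the algebra over $\mathbb C$ generated by $E,F,K^{\pm1}$ with relations $KK^{-1}=K^{-1}K=1$, $qEK-q^{-1}KE=0$, $qKF-q^{-1}FK=0$, $EF-FE=\frac{K-K^{-1}}{q-q^{-1}}$. *)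

theory Defs
  imports Complex_Main
begin

text \<open>The vector space Omega is an abstract vector space over the field 'a, given by a scalar
multiplication scale satisfying the vector_space locale. L(Omega) is its set of subspaces.\<close>

definition subspaces :: "('a::field \<Rightarrow> 'v::ab_group_add \<Rightarrow> 'v) \<Rightarrow> 'v set set" where
  "subspaces scale = {S. module.subspace scale S}"

definition covered_by :: "('a::field \<Rightarrow> 'v::ab_group_add \<Rightarrow> 'v) \<Rightarrow> 'v set \<Rightarrow> 'v set \<Rightarrow> bool" where
  "covered_by scale x' x \<longleftrightarrow> x' \<subseteq> x \<and> vector_space.dim scale x' + 1 = vector_space.dim scale x"

text \<open>The complex vector space with basis L(Omega): complex-valued functions on sets of vectors
that vanish outside L(Omega) (L(Omega) is finite here, so this is the free vector space).\<close>
definition CL :: "('a::field \<Rightarrow> 'v::ab_group_add \<Rightarrow> 'v) \<Rightarrow> ('v set \<Rightarrow> complex) set" where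
  "CL scale = {f. \<forall>y. y \<notin> subspaces scale \<longrightarrow> f y = 0}"

definition bvec :: "'v set \<Rightarrow> ('v set \<Rightarrow> complex)" where
  "bvec x = (\<lambda>y. if y = x then 1 else 0)"

definition lin_endo :: "('a::field \<Rightarrow> 'v::ab_group_add \<Rightarrow> 'v) \<Rightarrow>
    (('v set \<Rightarrow> complex) \<Rightarrow> ('v set \<Rightarrow> complex)) \<Rightarrow> bool" where
  "lin_endo scale M \<longleftrightarrow> (\<forall>u \<in> CL scale. M u \<in> CL scale) \<and>
     (\<forall>u \<in> CL scale. \<forall>v \<in> CL scale. \<forall>a b. \<forall>y.
        M (\<lambda>z. a * u z + b * v z) y = a * M u y + b * M v y)"

definition Uq_module :: "('a::field \<Rightarrow> 'v::ab_group_add \<Rightarrow> 'v) \<Rightarrow> complex \<Rightarrow>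
    (('v set \<Rightarrow> complex) \<Rightarrow> ('v set \<Rightarrow> complex)) \<Rightarrow>
    (('v set \<Rightarrow> complex) \<Rightarrow> ('v set \<Rightarrow> complex)) \<Rightarrow>
    (('v set \<Rightarrow> complex) \<Rightarrow> ('v set \<Rightarrow> complex)) \<Rightarrow>
    (('v set \<Rightarrow> complex) \<Rightarrow> ('v set \<Rightarrow> complex)) \<Rightarrow> bool" where
  "Uq_module scale q E F K Ki \<longleftrightarrow>
     lin_endo scale E \<and> lin_endo scale F \<and> lin_endo scale K \<and> lin_endo scale Ki \<and>
     (\<forall>v \<in> CL scale. \<forall>y.
        K (Ki v) y = v y \<and> Ki (K v) y = v y \<and>
        q * E (K v) y - inverse q * K (E v) y = 0 \<and>
        q * K (F v) y - inverse q * F (K v) y = 0 \<and>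
        E (F v) y - F (E v) y = (K v y - Ki v y) / (q - inverse q))"

end

theory Submission imports Defs begin

lemma double_count:
  assumes "finite A" "finite B"
  shows "(\<Sum>a\<in>A. card {b\<in>B. P a b}) = (\<Sum>b\<in>B. card {a\<in>A. P a b})"
proof -
  have c: "\<And>X Q. finite X \<Longrightarrow> card {x\<in>X. Q x} = (\<Sum>x\<in>X. if Q x then 1 else 0::nat)"
    by (simp add: sum.If_cases Int_def)
  show ?thesis using assms by (simp add: c sum.swap[of _ A])
qed

lemma card_field_ge2: "finite (UNIV::'a::field set) \<Longrightarrow> 2 \<le> card (UNIV::'a set)"
proof -
  assume f: "finite (UNIV::'a set)"
  have "card {0::'a, 1} = 2" by simp
  moreover have "card {0::'a, 1} \<le> card (UNIV::'a set)" using f by (rule card_mono) simp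
  ultimately show ?thesis by simp
qed

context finite_dimensional_vector_space
begin

lemma card_span_indep:
  assumes fa: "finite (UNIV::'a set)" and fb: "finite (UNIV::'b set)" and "independent B"
  shows "card (span B) = card (UNIV::'a set) ^ card B"
proof -
  have "finite B" using assms(3) finiteI_independent by blast
  then show ?thesis using assms(3)
  proof (induction B rule: finite_induct)
    case empty
    then show ?case by (simp add: span_empty)
  next
    case (insert v B)
    have iB: "independent B" using insert.prems
      using dependent_mono subset_insertI by blast
    have vn: "v \<notin> span B" using insert.prems insert.hyps(2)
      by (simp add: independent_insert)
    have "span (insert v B) = (\<lambda>(c,s). c *s v + s) ` ((UNIV::'a set) \<times> span B)"
    proof safe
      fix x assume "x \<in> span (insert v B)"
      then obtain k where "x - k *s v \<in> span B" using span_breakdown_eq by blast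
      then show "x \<in> (\<lambda>(c,s). c *s v + s) ` ((UNIV::'a set) \<times> span B)"
        by (intro image_eqI[of _ _ "(k, x - k *s v)"]) auto
    next
      fix c s assume "s \<in> span B"
      then show "c *s v + s \<in> span (insert v B)"
        by (meson in_mono insertI1 span_add span_base span_mono span_scale subset_insertI)
    qed
    moreover have "inj_on (\<lambda>(c,s). c *s v + s) ((UNIV::'a set) \<times> span B)"
    proof (rule inj_onI, clarsimp)
      fix c s c' s' assume s: "s \<in> span B" "s' \<in> span B" and e: "c *s v + s = c' *s v + s'"
      have "(c - c') *s v = s' - s" using e
        by (simp add: scale_left_diff_distrib algebra_simps)
      moreover have "s' - s \<in> span B" using s by (simp add: span_diff)
      ultimately have "c = c'" using vn
        by (metis eq_iff_diff_eq_0 span_scale scale_left_imp_eq scale_one scale_scale right_inverse)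
      then show "c = c' \<and> s = s'" using e by simp
    qed
    ultimately have "card (span (insert v B)) = card ((UNIV::'a set) \<times> span B)"
      by (simp add: card_image)
    also have "\<dots> = card (UNIV::'a set) * card (span B)" by (simp add: card_cartesian_product)
    finally show ?case using insert iB by simp
  qed
qed

lemma card_subspace:
  assumes fa: "finite (UNIV::'a set)" and fb: "finite (UNIV::'b set)" and W: "subspace W"
  shows "card W = card (UNIV::'a set) ^ dim W"
proof -
  obtain B where B: "B \<subseteq> W" "independent B" "W \<subseteq> span B" "card B = dim W"
    using basis_exists[of W] by metis
  have "span B = W" using span_subspace[OF B(1) B(3) W] .
  then show ?thesis using card_span_indep[OF fa fb B(2)] B(4) by simp
qed

lemma span_insert_cover:
  assumes u: "subspace u" and v: "v \<notin> u"
  shows "subspace (span (insert v u)) \<and> u \<subseteq> span (insert v u) \<and>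
         dim (span (insert v u)) = dim u + 1 \<and> v \<in> span (insert v u)"
proof -
  have "v \<notin> span u" using u v span_eq_iff[of u] by metis
  then have "dim (insert v u) = dim u + 1" by (simp add: dim_insert)
  then have "dim (span (insert v u)) = dim u + 1" using dim_span[of "insert v u"] by simp
  moreover have "u \<subseteq> span (insert v u)" "v \<in> span (insert v u)"
    using span_superset[of "insert v u"] by auto
  ultimately show ?thesis using subspace_span by blast
qed

lemma cover_eq:
  assumes u: "subspace u" and u': "subspace u'" and "u \<subseteq> u'" and d: "dim u' = dim u + 1"
    and "v \<in> u'" and "v \<notin> u"
  shows "u' = span (insert v u)"
proof -
  have S: "span (insert v u) \<subseteq> u'" using assms by (simp add: span_minimal)
  have "dim (span (insert v u)) = dim u + 1" using span_insert_cover[OF u \<open>v \<notin> u\<close>] by simp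
  then show ?thesis using subspace_dim_equal[OF subspace_span u' S] d by simp
qed

definition upset where "upset u x = {u'. subspace u' \<and> u \<subseteq> u' \<and> dim u' = dim u + 1 \<and> u' \<subseteq> x}"
definition dnset where "dnset u x = {w. subspace w \<and> u \<subseteq> w \<and> w \<subseteq> x \<and> dim w + 1 = dim x}"

lemma card_upset:
  assumes fa: "finite (UNIV::'a set)" and fb: "finite (UNIV::'b set)"
    and u: "subspace u" and x: "subspace x" and ux: "u \<subseteq> x"
  shows "card (upset u x) * (card (UNIV::'a set) - 1) = card (UNIV::'a set) ^ (dim x - dim u) - 1"
proof -
  define Q where "Q = card (UNIV::'a set)"
  define d where "d = dim u"
  have Qpos: "Q > 0" using fa unfolding Q_def by (simp add: finite_UNIV_card_ge_0)
  have xu: "x - u = \<Union> ((\<lambda>u'. u' - u) ` upset u x)"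
  proof (rule equalityI)
    show "x - u \<subseteq> \<Union> ((\<lambda>u'. u' - u) ` upset u x)"
    proof (rule subsetI)
      fix v assume "v \<in> x - u"
      then have vx: "v \<in> x" and vu: "v \<notin> u" by auto
      note c = span_insert_cover[OF u vu]
      have "span (insert v u) \<subseteq> x" using vx ux x by (simp add: span_minimal)
      then have m: "span (insert v u) \<in> upset u x" using c unfolding upset_def by simp
      have "v \<in> span (insert v u) - u" using c vu by simp
      then show "v \<in> \<Union> ((\<lambda>u'. u' - u) ` upset u x)" using m by (rule UN_I[rotated])
    qed
    show "\<Union> ((\<lambda>u'. u' - u) ` upset u x) \<subseteq> x - u" unfolding upset_def by blast
  qed
  have finB: "\<And>A::'b set. finite A" by (rule finite_subset[OF subset_UNIV fb])
  have fin: "finite (upset u x)"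
    by (rule finite_subset[OF subset_UNIV]) (simp add: Finite_Set.finite_set fb)
  have "card (x - u) = (\<Sum>u'\<in>upset u x. card (u' - u))"
    unfolding xu
  proof (rule card_UN_disjoint[OF fin])
    show "\<forall>i\<in>upset u x. finite (i - u)" using finB by simp
    show "\<forall>i\<in>upset u x. \<forall>j\<in>upset u x. i \<noteq> j \<longrightarrow> (i - u) \<inter> (j - u) = {}"
    proof (intro ballI impI)
      fix i j assume i: "i \<in> upset u x" and j: "j \<in> upset u x" and "i \<noteq> j"
      show "(i - u) \<inter> (j - u) = {}"
      proof (rule ccontr)
        assume "(i - u) \<inter> (j - u) \<noteq> {}"
        then obtain v where "v \<in> i" "v \<in> j" "v \<notin> u" by blast
        then have "i = span (insert v u)" "j = span (insert v u)"
          using cover_eq[OF u] i j unfolding upset_def by auto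
        then show False using \<open>i \<noteq> j\<close> by simp
      qed
    qed
  qed
  also have "\<dots> = (\<Sum>u'\<in>upset u x. Q ^ (d + 1) - Q ^ d)"
  proof (rule sum.cong[OF refl])
    fix u' assume "u' \<in> upset u x"
    then have h: "subspace u'" "u \<subseteq> u'" "dim u' = d + 1" unfolding upset_def d_def by auto
    have "card (u' - u) = card u' - card u" using h(2) finB by (simp add: card_Diff_subset)
    also have "\<dots> = Q ^ (d + 1) - Q ^ d"
      using card_subspace[OF fa fb h(1)] card_subspace[OF fa fb u] h(3) unfolding Q_def d_def by simp
    finally show "card (u' - u) = Q ^ (d + 1) - Q ^ d" .
  qed
  also have "\<dots> = card (upset u x) * (Q ^ (d + 1) - Q ^ d)" by simp
  finally have e0: "card (x - u) = card (upset u x) * (Q ^ (d + 1) - Q ^ d)" .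
  have "card (x - u) = card x - card u" using ux finB by (simp add: card_Diff_subset)
  also have "\<dots> = Q ^ dim x - Q ^ d"
    using card_subspace[OF fa fb x] card_subspace[OF fa fb u] unfolding Q_def d_def by simp
  finally have e1: "card (upset u x) * (Q ^ (d + 1) - Q ^ d) = Q ^ dim x - Q ^ d" using e0 by simp
  have dm: "d \<le> dim x" unfolding d_def using ux by (simp add: dim_subset)
  have p: "Q ^ dim x = Q ^ d * Q ^ (dim x - d)" using dm by (metis le_add_diff_inverse power_add)
  have a: "Q ^ (d + 1) - Q ^ d = Q ^ d * (Q - 1)" by (simp add: right_diff_distrib' mult.commute)
  have b: "Q ^ dim x - Q ^ d = Q ^ d * (Q ^ (dim x - d) - 1)" unfolding p by (simp add: right_diff_distrib')
  have "Q ^ d * (card (upset u x) * (Q - 1)) = Q ^ d * (Q ^ (dim x - d) - 1)"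
    using e1 unfolding a b by (metis mult.left_commute)
  then have r: "card (upset u x) * (Q - 1) = Q ^ (dim x - d) - 1" using Qpos by simp
  show ?thesis using r by (simp only: Q_def d_def)
qed


lemma card_dnset_aux:
  assumes fa: "finite (UNIV::'a set)" and fb: "finite (UNIV::'b set)" and x: "subspace x"
  shows "\<forall>u. dim x - dim u = n \<longrightarrow> subspace u \<longrightarrow> u \<subseteq> x \<longrightarrow> dim u < dim x \<longrightarrow>
           card (dnset u x) = card (upset u x)"
proof (induction n rule: less_induct)
  case (less n)
  show ?case
  proof (intro allI impI)
    fix u assume n: "dim x - dim u = n" and u: "subspace u" and ux: "u \<subseteq> x" and lt: "dim u < dim x"
    define Q where "Q = card (UNIV::'a set)"
    have Q2: "2 \<le> Q" unfolding Q_def using card_field_ge2[OF fa] .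
    have finS: "\<And>A::'b set set. finite A"
      by (rule finite_subset[OF subset_UNIV]) (simp add: Finite_Set.finite_set fb)
    show "card (dnset u x) = card (upset u x)"
    proof (cases "n = 1")
      case True
      then have d: "dim x = dim u + 1" using n lt by simp
      have "w \<in> dnset u x \<longleftrightarrow> w = u" for w
      proof
        assume "w \<in> dnset u x"
        then have "subspace w" "u \<subseteq> w" "dim w \<le> dim u" unfolding dnset_def using d by auto
        then show "w = u" using subspace_dim_equal[OF u] by (metis)
      next
        assume "w = u" then show "w \<in> dnset u x" using u ux d unfolding dnset_def by auto
      qed
      then have "dnset u x = {u}" by blast
      moreover have "w \<in> upset u x \<longleftrightarrow> w = x" for w
      proof
        assume "w \<in> upset u x"
        then have "subspace w" "w \<subseteq> x" "dim x \<le> dim w" unfolding upset_def using d by auto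
        then show "w = x" using subspace_dim_equal[OF _ x] by metis
      next
        assume "w = x" then show "w \<in> upset u x" using x ux d unfolding upset_def by auto
      qed
      then have "upset u x = {x}" by blast
      ultimately show ?thesis by simp
    next
      case False
      then have n2: "n \<ge> 2" using n lt by simp
      define K where "K = Q ^ (n - 1) - 1"
      have Kpos: "K > 0" unfolding K_def using Q2 n2
        by (metis One_nat_def Suc_1 Suc_le_lessD diff_is_0_eq leI less_one one_less_power zero_less_diff)
      have Q1: "Q - 1 > 0" using Q2 by simp
      define c where "c = K div (Q - 1)"
      have cpos: "c > 0"
      proof -
        have "Q ^ (n-1) \<ge> Q ^ 1" using n2 Q2 by (intro power_increasing) auto
        then have "K \<ge> Q - 1" unfolding K_def by simp
        then show ?thesis unfolding c_def using Q1 by (simp add: div_greater_zero_iff)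
      qed
      have T: "t = c" if "t * (Q - 1) = K" for t
        unfolding c_def using that Q1 by auto
      have L: "\<And>u'. u' \<in> upset u x \<Longrightarrow> card {w\<in>dnset u x. u' \<subseteq> w} = c"
      proof -
        fix u' assume h: "u' \<in> upset u x"
        then have h': "subspace u'" "u \<subseteq> u'" "dim u' = dim u + 1" "u' \<subseteq> x" unfolding upset_def by auto
        have "{w\<in>dnset u x. u' \<subseteq> w} = dnset u' x" using h' unfolding dnset_def by auto
        moreover have "card (dnset u' x) = card (upset u' x)"
          using less.IH[of "n - 1"] n h' lt n2 by auto
        moreover have "card (upset u' x) * (Q - 1) = K"
        proof -
          have e: "dim x - dim u' = n - 1" using h'(3) n by simp
          show ?thesis using card_upset[OF fa fb h'(1) x h'(4)] unfolding e K_def Q_def .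
        qed
        ultimately show "card {w\<in>dnset u x. u' \<subseteq> w} = c" using T by simp
      qed
      have R: "\<And>w. w \<in> dnset u x \<Longrightarrow> card {u'\<in>upset u x. u' \<subseteq> w} = c"
      proof -
        fix w assume h: "w \<in> dnset u x"
        then have h': "subspace w" "u \<subseteq> w" "dim w + 1 = dim x" "w \<subseteq> x" unfolding dnset_def by auto
        have "{u'\<in>upset u x. u' \<subseteq> w} = upset u w" using h' unfolding upset_def by auto
        moreover have "card (upset u w) * (Q - 1) = K"
        proof -
          have e: "dim w - dim u = n - 1" using h'(3) n by simp
          show ?thesis using card_upset[OF fa fb u h'(1) h'(2)] unfolding e K_def Q_def .
        qed
        ultimately show "card {u'\<in>upset u x. u' \<subseteq> w} = c" using T by simp
      qed
      have "(\<Sum>u'\<in>upset u x. card {w\<in>dnset u x. u' \<subseteq> w}) = (\<Sum>w\<in>dnset u x. card {u'\<in>upset u x. u' \<subseteq> w})"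
        by (rule double_count[OF finS finS])
      then have "card (upset u x) * c = card (dnset u x) * c" using L R by simp
      then show ?thesis using cpos by simp
    qed
  qed
qed

lemma card_dnset:
  assumes fa: "finite (UNIV::'a set)" and fb: "finite (UNIV::'b set)"
    and u: "subspace u" and x: "subspace x" and ux: "u \<subseteq> x" and lt: "dim u < dim x"
  shows "card (dnset u x) = card (upset u x)"
  using card_dnset_aux[OF fa fb x] u ux lt by blast


lemma offdiag:
  assumes y: "subspace y" and z: "subspace z" and ne: "y \<noteq> z" and dy: "dim y = dim z"
  shows "card {x. subspace x \<and> y \<subseteq> x \<and> z \<subseteq> x \<and> dim x = dim y + 1} =
         card {w. subspace w \<and> w \<subseteq> y \<and> w \<subseteq> z \<and> dim w + 1 = dim y}"
proof -
  define P where "P = {a + b |a b. a \<in> y \<and> b \<in> z}"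
  define I where "I = y \<inter> z"
  have sP: "subspace P" unfolding P_def using subspace_sums[OF y z] .
  have sI: "subspace I" unfolding I_def using subspace_inter[OF y z] .
  have yP: "y \<subseteq> P"
  proof
    fix a assume "a \<in> y" then show "a \<in> P" unfolding P_def using subspace_0[OF z] by force
  qed
  have zP: "z \<subseteq> P"
  proof
    fix b assume "b \<in> z" then show "b \<in> P" unfolding P_def using subspace_0[OF y] by force
  qed
  have form: "dim P + dim I = dim y + dim z" unfolding P_def I_def using dim_sums_Int[OF y z] .
  have "dim y \<noteq> dim P"
  proof
    assume "dim y = dim P"
    then have "y = P" using subspace_dim_equal[OF y sP yP] by simp
    then have "z \<subseteq> y" using zP by simp
    then show False using subspace_dim_equal[OF z y] dy ne by auto
  qed
  then have ltP: "dim y < dim P" using dim_subset[OF yP] by simp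
  have "dim I \<noteq> dim y"
  proof
    assume "dim I = dim y"
    then have "I = y" using subspace_dim_equal[OF sI y] unfolding I_def by auto
    then have "y \<subseteq> z" unfolding I_def by auto
    then show False using subspace_dim_equal[OF y z] dy ne by auto
  qed
  then have ltI: "dim I < dim y" using dim_subset[of I y] unfolding I_def by auto
  have U: "{x. subspace x \<and> y \<subseteq> x \<and> z \<subseteq> x \<and> dim x = dim y + 1} =
           (if dim P = dim y + 1 then {P} else {})"
  proof -
    have "x = P \<and> dim P = dim y + 1" if h: "subspace x" "y \<subseteq> x" "z \<subseteq> x" "dim x = dim y + 1" for x
    proof -
      have "P \<subseteq> x"
      proof
        fix t assume "t \<in> P"
        then obtain a b where "t = a + b" "a \<in> y" "b \<in> z" unfolding P_def by blast
        then show "t \<in> x" using h subspace_add[OF h(1)] by blast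
      qed
      then have "dim P \<le> dim x" by (rule dim_subset)
      then have "dim P = dim x" using ltP h(4) by simp
      then show ?thesis using subspace_dim_equal[OF sP h(1) \<open>P \<subseteq> x\<close>] h(4) by simp
    qed
    note X = this
    show ?thesis
    proof (cases "dim P = dim y + 1")
      case True
      have "x \<in> {x. subspace x \<and> y \<subseteq> x \<and> z \<subseteq> x \<and> dim x = dim y + 1} \<longleftrightarrow> x = P" for x
      proof
        assume "x \<in> {x. subspace x \<and> y \<subseteq> x \<and> z \<subseteq> x \<and> dim x = dim y + 1}"
        then have "subspace x" "y \<subseteq> x" "z \<subseteq> x" "dim x = dim y + 1" by auto
        then show "x = P" using X[of x] by simp
      next
        assume "x = P" then show "x \<in> {x. subspace x \<and> y \<subseteq> x \<and> z \<subseteq> x \<and> dim x = dim y + 1}"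
          using sP yP zP True by simp
      qed
      note M = this
      have "{x. subspace x \<and> y \<subseteq> x \<and> z \<subseteq> x \<and> dim x = dim y + 1} = {P}"
      proof (rule set_eqI)
        fix t show "t \<in> {x. subspace x \<and> y \<subseteq> x \<and> z \<subseteq> x \<and> dim x = dim y + 1} \<longleftrightarrow> t \<in> {P}"
          using M[of t] by (simp only: singleton_iff)
      qed
      then show ?thesis using True by simp
    next
      case False
      have "{x. subspace x \<and> y \<subseteq> x \<and> z \<subseteq> x \<and> dim x = dim y + 1} = {}"
      proof (rule equals0I)
        fix x assume "x \<in> {x. subspace x \<and> y \<subseteq> x \<and> z \<subseteq> x \<and> dim x = dim y + 1}"
        then have "subspace x" "y \<subseteq> x" "z \<subseteq> x" "dim x = dim y + 1" by auto
        then show False using X[of x] False by simp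
      qed
      then show ?thesis using False by simp
    qed
  qed
  have W: "{w. subspace w \<and> w \<subseteq> y \<and> w \<subseteq> z \<and> dim w + 1 = dim y} =
           (if dim I + 1 = dim y then {I} else {})"
  proof -
    have "w = I \<and> dim I + 1 = dim y" if h: "subspace w" "w \<subseteq> y" "w \<subseteq> z" "dim w + 1 = dim y" for w
    proof -
      have wI: "w \<subseteq> I" unfolding I_def using h by blast
      then have "dim w \<le> dim I" by (rule dim_subset)
      then have "dim w = dim I" using ltI h(4) by simp
      then show ?thesis using subspace_dim_equal[OF h(1) sI wI] h(4) by simp
    qed
    note X = this
    show ?thesis
    proof (cases "dim I + 1 = dim y")
      case True
      have "w \<in> {w. subspace w \<and> w \<subseteq> y \<and> w \<subseteq> z \<and> dim w + 1 = dim y} \<longleftrightarrow> w = I" for w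
      proof
        assume "w \<in> {w. subspace w \<and> w \<subseteq> y \<and> w \<subseteq> z \<and> dim w + 1 = dim y}"
        then have "subspace w" "w \<subseteq> y" "w \<subseteq> z" "dim w + 1 = dim y" by auto
        then show "w = I" using X[of w] by simp
      next
        assume "w = I" then show "w \<in> {w. subspace w \<and> w \<subseteq> y \<and> w \<subseteq> z \<and> dim w + 1 = dim y}"
          using sI True unfolding I_def by simp
      qed
      note M = this
      have "{w. subspace w \<and> w \<subseteq> y \<and> w \<subseteq> z \<and> dim w + 1 = dim y} = {I}"
      proof (rule set_eqI)
        fix t show "t \<in> {w. subspace w \<and> w \<subseteq> y \<and> w \<subseteq> z \<and> dim w + 1 = dim y} \<longleftrightarrow> t \<in> {I}"
          using M[of t] by (simp only: singleton_iff)
      qed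
      then show ?thesis using True by simp
    next
      case False
      have "{w. subspace w \<and> w \<subseteq> y \<and> w \<subseteq> z \<and> dim w + 1 = dim y} = {}"
      proof (rule equals0I)
        fix w assume "w \<in> {w. subspace w \<and> w \<subseteq> y \<and> w \<subseteq> z \<and> dim w + 1 = dim y}"
        then have "subspace w" "w \<subseteq> y" "w \<subseteq> z" "dim w + 1 = dim y" by auto
        then show False using X[of w] False by simp
      qed
      then show ?thesis using False by simp
    qed
  qed
  have "dim P = dim y + 1 \<longleftrightarrow> dim I + 1 = dim y" using form dy by auto
  then show ?thesis unfolding U W by simp
qed

end


definition mop :: "'s set \<Rightarrow> ('s \<Rightarrow> 's \<Rightarrow> complex) \<Rightarrow> ('s \<Rightarrow> complex) \<Rightarrow> ('s \<Rightarrow> complex)" where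
  "mop S m v = (\<lambda>y. \<Sum>x\<in>S. m y x * v x)"

lemma mop_comp:
  "mop S a (mop S b v) y = (\<Sum>z\<in>S. (\<Sum>x\<in>S. a y x * b x z) * v z)"
proof -
  have "mop S a (mop S b v) y = (\<Sum>x\<in>S. \<Sum>z\<in>S. a y x * b x z * v z)"
    unfolding mop_def by (simp add: sum_distrib_left mult.assoc)
  also have "\<dots> = (\<Sum>z\<in>S. \<Sum>x\<in>S. a y x * b x z * v z)" by (rule sum.swap)
  also have "\<dots> = (\<Sum>z\<in>S. (\<Sum>x\<in>S. a y x * b x z) * v z)" by (simp add: sum_distrib_right)
  finally show ?thesis .
qed

lemma diag_identity:
  fixes q a b A B :: complex
  assumes "q \<noteq> 0" "q^2 \<noteq> 1" "a \<noteq> 0" "b \<noteq> 0" "A * (q^2 - 1) = a^2 - 1" "B * (q^2 - 1) = b^2 - 1"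
  shows "q / (a * b) * (A - B) = (a / b - b / a) / (q - inverse q)"
proof -
  have h: "q^2 - 1 \<noteq> 0" using assms by simp
  have AB: "(A - B) * (q^2 - 1) = a^2 - b^2" by (simp add: left_diff_distrib assms(5,6))
  have h2: "q - inverse q = (q^2 - 1) / q" using assms by (simp add: field_simps power2_eq_square)
  have "(a / b - b / a) = (a^2 - b^2) / (a * b)" using assms by (simp add: field_simps power2_eq_square)
  then have "(a / b - b / a) / (q - inverse q) = (A - B) * (q^2 - 1) / (a * b) * q / (q^2 - 1)"
    unfolding h2 AB using assms h by simp
  also have "\<dots> = q / (a * b) * (A - B)"
  proof -
    have gen: "\<And>r X. r \<noteq> 0 \<Longrightarrow> X * r / (a * b) * q / r = q / (a * b) * X" by simp
    show ?thesis by (rule gen[OF h])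
  qed
  finally show ?thesis by simp
qed

lemma mop_bvec:
  assumes "finite S" "x \<in> S"
  shows "mop S m (bvec x) = (\<lambda>y. m y x)"
proof
  fix y
  have "(\<Sum>x0\<in>S. m y x0 * bvec x x0) = (\<Sum>x0\<in>S. if x0 = x then m y x else 0)"
    by (rule sum.cong) (auto simp: bvec_def)
  also have "\<dots> = m y x" using assms by simp
  finally show "mop S m (bvec x) y = m y x" unfolding mop_def .
qed

lemma lin_endo_mop:
  assumes "\<And>y x. y \<notin> subspaces scale \<Longrightarrow> x \<in> subspaces scale \<Longrightarrow> m y x = 0"
  shows "lin_endo scale (mop (subspaces scale) m)"
  unfolding lin_endo_def
proof (intro conjI ballI allI)
  fix u assume "u \<in> CL scale"
  show "mop (subspaces scale) m u \<in> CL scale"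
    unfolding CL_def mop_def using assms by simp
next
  fix u v a b y
  show "mop (subspaces scale) m (\<lambda>z. a * u z + b * v z) y =
        a * mop (subspaces scale) m u y + b * mop (subspaces scale) m v y"
    unfolding mop_def by (simp add: sum.distrib sum_distrib_left ring_distribs mult.left_commute)
qed

lemma sum_bool_card:
  assumes "finite S"
  shows "(\<Sum>x\<in>S. (if P x then 1 else 0) * (if Q x then 1 else 0) :: complex) = of_nat (card {x\<in>S. P x \<and> Q x})"
proof -
  have "(\<Sum>x\<in>S. (if P x then 1 else 0) * (if Q x then 1 else 0) :: complex) = (\<Sum>x\<in>S. if P x \<and> Q x then 1 else 0)"
    by (rule sum.cong) auto
  also have "\<dots> = (\<Sum>x\<in>{x\<in>S. P x \<and> Q x}. 1)"
    using sum.inter_filter[OF assms, of "\<lambda>_. 1::complex" "\<lambda>x. P x \<and> Q x"] by simp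
  also have "\<dots> = of_nat (card {x\<in>S. P x \<and> Q x})" by simp
  finally show ?thesis .
qed

lemma uniq_lin:
  assumes fin: "finite (subspaces scale)" and M: "lin_endo scale M" and M': "lin_endo scale M'"
    and eq: "\<And>x. x \<in> subspaces scale \<Longrightarrow> M (bvec x) = M' (bvec x)"
    and v: "v \<in> CL scale"
  shows "M v = M' v"
proof -
  let ?S = "subspaces scale"
  have bC: "x \<in> ?S \<Longrightarrow> bvec x \<in> CL scale" for x unfolding bvec_def CL_def by auto
  have lM: "\<And>u w a b y. u \<in> CL scale \<Longrightarrow> w \<in> CL scale \<Longrightarrow> M (\<lambda>z. a * u z + b * w z) y = a * M u y + b * M w y"
    using M unfolding lin_endo_def by blast
  have lM': "\<And>u w a b y. u \<in> CL scale \<Longrightarrow> w \<in> CL scale \<Longrightarrow> M' (\<lambda>z. a * u z + b * w z) y = a * M' u y + b * M' w y"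
    using M' unfolding lin_endo_def by blast
  have z: "(\<lambda>z. 0::complex) \<in> CL scale" unfolding CL_def by simp
  have "T \<subseteq> ?S \<longrightarrow> (\<lambda>z. \<Sum>x\<in>T. v x * bvec x z) \<in> CL scale \<and>
        M (\<lambda>z. \<Sum>x\<in>T. v x * bvec x z) = M' (\<lambda>z. \<Sum>x\<in>T. v x * bvec x z)" if "finite T" for T
    using that
  proof (induction T rule: finite_induct)
    case empty
    have "M (\<lambda>z. 0) = M' (\<lambda>z. 0)"
    proof
      fix y
      have "M (\<lambda>z. 0 * 0 + 0 * 0) y = 0 * M (\<lambda>z. 0) y + 0 * M (\<lambda>z. 0) y" by (rule lM[OF z z])
      moreover have "M' (\<lambda>z. 0 * 0 + 0 * 0) y = 0 * M' (\<lambda>z. 0) y + 0 * M' (\<lambda>z. 0) y" by (rule lM'[OF z z])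
      ultimately show "M (\<lambda>z. 0) y = M' (\<lambda>z. 0) y" by simp
    qed
    then show ?case using z by simp
  next
    case (insert x T)
    show ?case
    proof
      assume sub: "insert x T \<subseteq> ?S"
      let ?u = "\<lambda>z. \<Sum>x\<in>T. v x * bvec x z"
      have u: "?u \<in> CL scale" "M ?u = M' ?u" using insert sub by auto
      have xS: "x \<in> ?S" using sub by auto
      have e: "(\<lambda>z. \<Sum>x\<in>insert x T. v x * bvec x z) = (\<lambda>z. 1 * ?u z + v x * bvec x z)"
        using insert by (simp add: add.commute)
      have c: "(\<lambda>z. 1 * ?u z + v x * bvec x z) \<in> CL scale"
        using u(1) bC[OF xS] unfolding CL_def by simp
      have "M (\<lambda>z. 1 * ?u z + v x * bvec x z) = M' (\<lambda>z. 1 * ?u z + v x * bvec x z)"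
      proof
        fix y
        have "M (\<lambda>z. 1 * ?u z + v x * bvec x z) y = 1 * M ?u y + v x * M (bvec x) y"
          by (rule lM[OF u(1) bC[OF xS]])
        also have "\<dots> = 1 * M' ?u y + v x * M' (bvec x) y" by (simp only: u(2) eq[OF xS])
        also have "\<dots> = M' (\<lambda>z. 1 * ?u z + v x * bvec x z) y"
          by (rule lM'[OF u(1) bC[OF xS], symmetric])
        finally show "M (\<lambda>z. 1 * ?u z + v x * bvec x z) y = M' (\<lambda>z. 1 * ?u z + v x * bvec x z) y" .
      qed
      then show "(\<lambda>z. \<Sum>x\<in>insert x T. v x * bvec x z) \<in> CL scale \<and>
        M (\<lambda>z. \<Sum>x\<in>insert x T. v x * bvec x z) = M' (\<lambda>z. \<Sum>x\<in>insert x T. v x * bvec x z)"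
        using c unfolding e by simp
    qed
  qed
  then have "M (\<lambda>z. \<Sum>x\<in>?S. v x * bvec x z) = M' (\<lambda>z. \<Sum>x\<in>?S. v x * bvec x z)" using fin by blast
  moreover have "(\<lambda>z. \<Sum>x\<in>?S. v x * bvec x z) = v"
  proof
    fix z
    have "(\<Sum>x\<in>?S. v x * bvec x z) = (\<Sum>x\<in>?S. if x = z then v z else 0)"
      by (rule sum.cong) (auto simp: bvec_def)
    also have "\<dots> = v z" using fin v unfolding CL_def by auto
    finally show "(\<Sum>x\<in>?S. v x * bvec x z) = v z" .
  qed
  ultimately show ?thesis by simp
qed
theorem mainTheorem14:
  fixes scale :: "'a::{field,finite} \<Rightarrow> 'v::{ab_group_add,finite} \<Rightarrow> 'v"
    and D :: nat and q lam :: complex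
  assumes "vector_space scale"
    and "vector_space.dim scale (UNIV :: 'v set) = D"
    and "q = complex_of_real (sqrt (real (card (UNIV :: 'a set))))"
    and "lam \<noteq> 0"
  defines "P \<equiv> \<lambda>E F K Ki. Uq_module scale q E F K Ki \<and>
      (\<forall>x \<in> subspaces scale.
         E (bvec x) = (\<lambda>y. lam * inverse q ^ D *
            (\<Sum>x' \<in> {x'. x' \<in> subspaces scale \<and> covered_by scale x' x}. bvec x' y)) \<and>
         F (bvec x) = (\<lambda>y. inverse lam * q *
            (\<Sum>x' \<in> {x'. x' \<in> subspaces scale \<and> covered_by scale x x'}. bvec x' y)) \<and>
         K (bvec x) = (\<lambda>y. q powi (int D - 2 * int (vector_space.dim scale x)) * bvec x y) \<and>
         Ki (bvec x) = (\<lambda>y. q powi (- (int D - 2 * int (vector_space.dim scale x))) * bvec x y))"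
  shows "(\<exists>E F K Ki. P E F K Ki) \<and>
         (\<forall>E F K Ki E' F' K' Ki'. P E F K Ki \<longrightarrow> P E' F' K' Ki' \<longrightarrow>
            (\<forall>v \<in> CL scale. E v = E' v \<and> F v = F' v \<and> K v = K' v \<and> Ki v = Ki' v))"
proof -
  interpret vs: vector_space scale by fact
  obtain B where B: "B \<subseteq> UNIV" "vs.independent B" "UNIV \<subseteq> vs.span B" "card B = vs.dim UNIV"
    using vs.basis_exists[of UNIV] by metis
  have fB: "finite B" by simp
  interpret fd: finite_dimensional_vector_space scale B
    by unfold_locales (use fB B in auto)
  let ?S = "subspaces scale"
  have finS: "finite ?S" by simp
  have fa: "finite (UNIV::'a set)" by simp
  have fb: "finite (UNIV::'v set)" by simp
  have Sff: "x \<in> ?S \<longleftrightarrow> module.subspace scale x" for x unfolding subspaces_def by simp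
  have cov: "covered_by scale a b \<longleftrightarrow> a \<subseteq> b \<and> vector_space.dim scale a + 1 = vector_space.dim scale b" for a b
    unfolding covered_by_def by simp
  define Q where "Q = card (UNIV::'a set)"
  have Q2: "2 \<le> Q" unfolding Q_def by (rule card_field_ge2[OF fa])
  have qQ: "q^2 = of_nat Q" unfolding assms(3) Q_def
    by (simp flip: of_real_power)
  have q0: "q \<noteq> 0" using qQ Q2 by auto
  have q1: "q^2 \<noteq> 1"
  proof
    assume "q^2 = 1"
    then have "(of_nat Q::complex) = of_nat 1" using qQ by simp
    then have "Q = 1" by (simp only: of_nat_eq_iff)
    then show False using Q2 by simp
  qed
  define kd where "kd = (\<lambda>x. q powi (int D - 2 * int (vector_space.dim scale x)))"
  define kid where "kid = (\<lambda>x. q powi (- (int D - 2 * int (vector_space.dim scale x))))"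
  define em where "em = (\<lambda>y x. lam * inverse q ^ D * (if y \<in> ?S \<and> covered_by scale y x then 1 else 0))"
  define fm where "fm = (\<lambda>y x. inverse lam * q * (if y \<in> ?S \<and> covered_by scale x y then 1 else 0))"
  define km where "km = (\<lambda>y x. if y = x then kd x else (0::complex))"
  define kim where "kim = (\<lambda>y x. if y = x then kid x else (0::complex))"
  define E0 where "E0 = mop ?S em"
  define F0 where "F0 = mop ?S fm"
  define K0 where "K0 = mop ?S km"
  define Ki0 where "Ki0 = mop ?S kim"
  have kdkid: "kd x * kid x = 1" for x
    unfolding kd_def kid_def power_int_minus using q0 by (intro right_inverse power_int_not_zero) simp
  have kshift: "q * q powi (n - 2) = inverse q * q powi n" for n :: int
    using q0 by (simp add: power_int_diff field_simps power2_eq_square)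
  have linE: "lin_endo scale E0" unfolding E0_def by (rule lin_endo_mop) (simp add: em_def)
  have linF: "lin_endo scale F0" unfolding F0_def by (rule lin_endo_mop) (simp add: fm_def)
  have linK: "lin_endo scale K0" unfolding K0_def by (rule lin_endo_mop) (auto simp: km_def)
  have linKi: "lin_endo scale Ki0" unfolding Ki0_def by (rule lin_endo_mop) (auto simp: kim_def)
  have ent_kk: "(\<Sum>x\<in>?S. km y x * kim x z) = (if y = z then 1 else 0)"
    and ent_kk': "(\<Sum>x\<in>?S. kim y x * km x z) = (if y = z then 1 else 0)" if "z \<in> ?S" for y z
  proof -
    have "(\<Sum>x\<in>?S. km y x * kim x z) = (\<Sum>x\<in>?S. if x = z then (if y = z then 1 else 0) else 0)"
      by (rule sum.cong) (auto simp: km_def kim_def kdkid)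
    then show "(\<Sum>x\<in>?S. km y x * kim x z) = (if y = z then 1 else 0)" using that finS by simp
    have "(\<Sum>x\<in>?S. kim y x * km x z) = (\<Sum>x\<in>?S. if x = z then (if y = z then 1 else 0) else 0)"
      by (rule sum.cong) (auto simp: km_def kim_def kdkid mult.commute)
    then show "(\<Sum>x\<in>?S. kim y x * km x z) = (if y = z then 1 else 0)" using that finS by simp
  qed
  have idv: "(\<Sum>z\<in>?S. (if y = z then 1 else 0) * v z) = v y" if "v \<in> CL scale" for v y
  proof (cases "y \<in> ?S")
    case True
    have "(\<Sum>z\<in>?S. (if y = z then 1 else 0) * v z) = (\<Sum>z\<in>?S. if y = z then v z else 0)"
      by (rule sum.cong) auto
    then show ?thesis using finS True by simp
  next
    case False
    then have "v y = 0" using that unfolding CL_def by auto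
    moreover have "(\<Sum>z\<in>?S. (if y = z then 1 else 0) * v z) = 0" using False
      by (intro sum.neutral) auto
    ultimately show ?thesis by simp
  qed
  have ent_ek: "(\<Sum>x\<in>?S. em y x * km x z) = em y z * kd z"
    and ent_ke: "(\<Sum>x\<in>?S. km y x * em x z) = kd y * em y z"
    and ent_fk: "(\<Sum>x\<in>?S. fm y x * km x z) = fm y z * kd z"
    and ent_kf: "(\<Sum>x\<in>?S. km y x * fm x z) = kd y * fm y z" if "z \<in> ?S" for y z
  proof -
    have "(\<Sum>x\<in>?S. em y x * km x z) = (\<Sum>x\<in>?S. if x = z then em y z * kd z else 0)"
      by (rule sum.cong) (auto simp: km_def)
    then show "(\<Sum>x\<in>?S. em y x * km x z) = em y z * kd z" using that finS by simp
    have "(\<Sum>x\<in>?S. fm y x * km x z) = (\<Sum>x\<in>?S. if x = z then fm y z * kd z else 0)"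
      by (rule sum.cong) (auto simp: km_def)
    then show "(\<Sum>x\<in>?S. fm y x * km x z) = fm y z * kd z" using that finS by simp
    have "(\<Sum>x\<in>?S. km y x * em x z) = (\<Sum>x\<in>?S. if x = y then kd y * em y z else 0)"
      by (rule sum.cong) (auto simp: km_def)
    also have "\<dots> = kd y * em y z" using finS by (simp add: em_def)
    finally show "(\<Sum>x\<in>?S. km y x * em x z) = kd y * em y z" .
    have "(\<Sum>x\<in>?S. km y x * fm x z) = (\<Sum>x\<in>?S. if x = y then kd y * fm y z else 0)"
      by (rule sum.cong) (auto simp: km_def)
    also have "\<dots> = kd y * fm y z" using finS by (simp add: fm_def)
    finally show "(\<Sum>x\<in>?S. km y x * fm x z) = kd y * fm y z" .
  qed
  have rel_ek: "q * (em y z * kd z) - inverse q * (kd y * em y z) = 0" for y z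
  proof (cases "y \<in> ?S \<and> covered_by scale y z")
    case True
    then have d: "vector_space.dim scale z = vector_space.dim scale y + 1" using cov by simp
    have "int D - 2 * int (vector_space.dim scale z) = (int D - 2 * int (vector_space.dim scale y)) - 2"
      using d by simp
    then have "q * kd z = inverse q * kd y" unfolding kd_def by (simp only: kshift)
    then show ?thesis by (simp add: algebra_simps)
  next
    case False
    then have "em y z = 0" unfolding em_def by auto
    then show ?thesis by simp
  qed
  have rel_kf: "q * (kd y * fm y z) - inverse q * (fm y z * kd z) = 0" for y z
  proof (cases "y \<in> ?S \<and> covered_by scale z y")
    case True
    then have d: "vector_space.dim scale y = vector_space.dim scale z + 1" using cov by simp
    have "int D - 2 * int (vector_space.dim scale y) = (int D - 2 * int (vector_space.dim scale z)) - 2"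
      using d by simp
    then have "q * kd y = inverse q * kd z" unfolding kd_def by (simp only: kshift)
    then show ?thesis by (simp add: algebra_simps)
  next
    case False
    then have "fm y z = 0" unfolding fm_def by auto
    then show ?thesis by simp
  qed
  define c1 where "c1 = inverse q ^ D * q"
  have c1e: "lam * inverse q ^ D * (inverse lam * q) = c1" unfolding c1_def using assms(4) by simp
  have ent_ef: "(\<Sum>x\<in>?S. em y x * fm x z) =
      c1 * of_nat (card {x\<in>?S. (y \<in> ?S \<and> covered_by scale y x) \<and> (x \<in> ?S \<and> covered_by scale z x)})" for y z
  proof -
    have "(\<Sum>x\<in>?S. em y x * fm x z) = (\<Sum>x\<in>?S. c1 * ((if y \<in> ?S \<and> covered_by scale y x then 1 else 0) *
            (if x \<in> ?S \<and> covered_by scale z x then 1 else 0)))"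
      by (rule sum.cong) (auto simp: em_def fm_def c1e[symmetric])
    also have "\<dots> = c1 * (\<Sum>x\<in>?S. (if y \<in> ?S \<and> covered_by scale y x then 1 else 0) *
            (if x \<in> ?S \<and> covered_by scale z x then 1 else 0))" by (simp add: sum_distrib_left)
    also have "\<dots> = c1 * of_nat (card {x\<in>?S. (y \<in> ?S \<and> covered_by scale y x) \<and> (x \<in> ?S \<and> covered_by scale z x)})"
      by (simp only: sum_bool_card[OF finS])
    finally show ?thesis .
  qed
  have ent_fe: "(\<Sum>x\<in>?S. fm y x * em x z) =
      c1 * of_nat (card {x\<in>?S. (y \<in> ?S \<and> covered_by scale x y) \<and> (x \<in> ?S \<and> covered_by scale x z)})" for y z
  proof -
    have "(\<Sum>x\<in>?S. fm y x * em x z) = (\<Sum>x\<in>?S. c1 * ((if y \<in> ?S \<and> covered_by scale x y then 1 else 0) *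
            (if x \<in> ?S \<and> covered_by scale x z then 1 else 0)))"
      by (rule sum.cong) (auto simp: em_def fm_def c1e[symmetric] mult.commute)
    also have "\<dots> = c1 * (\<Sum>x\<in>?S. (if y \<in> ?S \<and> covered_by scale x y then 1 else 0) *
            (if x \<in> ?S \<and> covered_by scale x z then 1 else 0))" by (simp add: sum_distrib_left)
    also have "\<dots> = c1 * of_nat (card {x\<in>?S. (y \<in> ?S \<and> covered_by scale x y) \<and> (x \<in> ?S \<and> covered_by scale x z)})"
      by (simp only: sum_bool_card[OF finS])
    finally show ?thesis .
  qed
  have Dd: "vector_space.dim scale (UNIV::'v set) = D" using assms(2) .
  have rel_ef: "c1 * of_nat (card {x\<in>?S. (y \<in> ?S \<and> covered_by scale y x) \<and> (x \<in> ?S \<and> covered_by scale z x)})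
      - c1 * of_nat (card {x\<in>?S. (y \<in> ?S \<and> covered_by scale x y) \<and> (x \<in> ?S \<and> covered_by scale x z)})
      = (km y z - kim y z) / (q - inverse q)" if zS: "z \<in> ?S" for y z
  proof (cases "y \<in> ?S")
    case False
    then have "y \<noteq> z" using zS by auto
    then show ?thesis using False by (simp add: km_def kim_def)
  next
    case yS: True
    have ys: "module.subspace scale y" using yS Sff by simp
    have zs: "module.subspace scale z" using zS Sff by simp
    show ?thesis
    proof (cases "y = z")
      case False
      have "card {x\<in>?S. (y \<in> ?S \<and> covered_by scale y x) \<and> (x \<in> ?S \<and> covered_by scale z x)} =
            card {x\<in>?S. (y \<in> ?S \<and> covered_by scale x y) \<and> (x \<in> ?S \<and> covered_by scale x z)}"
      proof (cases "vector_space.dim scale y = vector_space.dim scale z")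
        case True
        have e1: "{x\<in>?S. (y \<in> ?S \<and> covered_by scale y x) \<and> (x \<in> ?S \<and> covered_by scale z x)} =
            {x. module.subspace scale x \<and> y \<subseteq> x \<and> z \<subseteq> x \<and> vector_space.dim scale x = vector_space.dim scale y + 1}"
          using yS True by (auto simp: Sff cov)
        have e2: "{x\<in>?S. (y \<in> ?S \<and> covered_by scale x y) \<and> (x \<in> ?S \<and> covered_by scale x z)} =
            {w. module.subspace scale w \<and> w \<subseteq> y \<and> w \<subseteq> z \<and> vector_space.dim scale w + 1 = vector_space.dim scale y}"
          using yS True by (auto simp: Sff cov)
        show ?thesis unfolding e1 e2 by (rule fd.offdiag[OF ys zs False True])
      next
        case False
        have e1: "{x\<in>?S. (y \<in> ?S \<and> covered_by scale y x) \<and> (x \<in> ?S \<and> covered_by scale z x)} = {}"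
          using False by (auto simp: cov)
        have e2: "{x\<in>?S. (y \<in> ?S \<and> covered_by scale x y) \<and> (x \<in> ?S \<and> covered_by scale x z)} = {}"
          using False by (auto simp: cov)
        show ?thesis unfolding e1 e2 by simp
      qed
      then show ?thesis using False by (simp add: km_def kim_def)
    next
      case True
      define k where "k = vector_space.dim scale y"
      have kD: "k \<le> D" unfolding k_def using fd.dim_subset[of y UNIV] Dd by simp
      define A where "A = card {x\<in>?S. (y \<in> ?S \<and> covered_by scale y x) \<and> (x \<in> ?S \<and> covered_by scale y x)}"
      define Bn where "Bn = card {x\<in>?S. (y \<in> ?S \<and> covered_by scale x y) \<and> (x \<in> ?S \<and> covered_by scale x y)}"
      have Aeq: "A = card (fd.upset y UNIV)"
      proof -
        have "{x\<in>?S. (y \<in> ?S \<and> covered_by scale y x) \<and> (x \<in> ?S \<and> covered_by scale y x)} = fd.upset y UNIV"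
          unfolding fd.upset_def using yS by (auto simp: Sff cov)
        then show ?thesis unfolding A_def by simp
      qed
      have An: "A * (Q - 1) = Q ^ (D - k) - 1"
        using fd.card_upset[OF fa fb ys vs.subspace_UNIV subset_UNIV] unfolding Aeq Q_def k_def Dd .
      have Bnn: "Bn * (Q - 1) = Q ^ k - 1"
      proof (cases "k = 0")
        case True
        have "{x\<in>?S. (y \<in> ?S \<and> covered_by scale x y) \<and> (x \<in> ?S \<and> covered_by scale x y)} = {}"
        proof (rule equals0I)
          fix x assume "x \<in> {x\<in>?S. (y \<in> ?S \<and> covered_by scale x y) \<and> (x \<in> ?S \<and> covered_by scale x y)}"
          then have "vector_space.dim scale x + 1 = vector_space.dim scale y" unfolding cov by blast
          then show False using True unfolding k_def by linarith
        qed
        then show ?thesis unfolding Bn_def using True by simp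
      next
        case False
        have d0: "vector_space.dim scale {0::'v} = 0" by simp
        have "{x\<in>?S. (y \<in> ?S \<and> covered_by scale x y) \<and> (x \<in> ?S \<and> covered_by scale x y)} = fd.dnset {0} y"
          unfolding fd.dnset_def using yS by (auto simp: Sff cov vs.subspace_0)
        then have "Bn = card (fd.dnset {0} y)" unfolding Bn_def by simp
        also have "\<dots> = card (fd.upset {0} y)"
          using fd.card_dnset[OF fa fb vs.subspace_single_0 ys] False vs.subspace_0[OF ys] d0 unfolding k_def by simp
        finally show ?thesis
          using fd.card_upset[OF fa fb vs.subspace_single_0 ys] vs.subspace_0[OF ys] d0 unfolding Q_def k_def by simp
      qed
      define a where "a = q ^ (D - k)"
      define b where "b = q ^ k"
      have a0: "a \<noteq> 0" "b \<noteq> 0" unfolding a_def b_def using q0 by simp_all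
      have sq: "(q^2)^n = (q^n)^2" for n :: nat by (metis power_mult mult.commute)
      have Q1: "1 \<le> Q" using Q2 by simp
      have hA: "of_nat A * (q^2 - 1) = a^2 - 1"
      proof -
        have "(of_nat (A * (Q - 1)) :: complex) = of_nat (Q ^ (D - k) - 1)" using An by simp
        then have "of_nat A * (of_nat Q - 1) = (of_nat Q) ^ (D - k) - (1::complex)"
          using Q1 by (simp add: of_nat_diff)
        then show ?thesis unfolding qQ[symmetric] a_def sq .
      qed
      have hB: "of_nat Bn * (q^2 - 1) = b^2 - 1"
      proof -
        have "(of_nat (Bn * (Q - 1)) :: complex) = of_nat (Q ^ k - 1)" using Bnn by simp
        then have "of_nat Bn * (of_nat Q - 1) = (of_nat Q) ^ k - (1::complex)"
          using Q1 by (simp add: of_nat_diff)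
        then show ?thesis unfolding qQ[symmetric] b_def sq .
      qed
      have di: "q / (a * b) * (of_nat A - of_nat Bn) = (a / b - b / a) / (q - inverse q)"
        by (rule diag_identity[OF q0 q1 a0 hA hB])
      have ab: "a * b = q ^ D" unfolding a_def b_def using kD by (simp flip: power_add)
      have c1ab: "c1 = q / (a * b)" unfolding c1_def ab by (simp add: field_simps power_inverse)
      have ie: "int D - 2 * int k = int (D - k) - int k" using kD by simp
      have kdy: "kd y = a / b" unfolding kd_def k_def[symmetric] ie a_def b_def
        using q0 by (simp add: power_int_diff)
      have kidy: "kid y = b / a" unfolding kid_def k_def[symmetric] ie a_def b_def
        using q0 by (simp add: power_int_diff power_int_minus)
      show ?thesis using di unfolding True[symmetric] A_def[symmetric] Bn_def[symmetric] c1ab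
        by (simp add: km_def kim_def kdy kidy right_diff_distrib)
    qed
  qed
  have UqM: "Uq_module scale q E0 F0 K0 Ki0"
    unfolding Uq_module_def
  proof (intro conjI linE linF linK linKi ballI allI)
    fix v y assume v: "v \<in> CL scale"
    have "K0 (Ki0 v) y = (\<Sum>z\<in>?S. (if y = z then 1 else 0) * v z)"
      unfolding K0_def Ki0_def mop_comp by (rule sum.cong) (simp_all add: ent_kk)
    then show "K0 (Ki0 v) y = v y" using idv[OF v] by simp
    have "Ki0 (K0 v) y = (\<Sum>z\<in>?S. (if y = z then 1 else 0) * v z)"
      unfolding K0_def Ki0_def mop_comp by (rule sum.cong) (simp_all add: ent_kk')
    then show "Ki0 (K0 v) y = v y" using idv[OF v] by simp
    have s1: "E0 (K0 v) y = (\<Sum>z\<in>?S. (em y z * kd z) * v z)"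
      unfolding E0_def K0_def mop_comp by (rule sum.cong) (simp_all add: ent_ek)
    have s2: "K0 (E0 v) y = (\<Sum>z\<in>?S. (kd y * em y z) * v z)"
      unfolding E0_def K0_def mop_comp by (rule sum.cong) (simp_all add: ent_ke)
    have "q * E0 (K0 v) y - inverse q * K0 (E0 v) y =
          (\<Sum>z\<in>?S. q * ((em y z * kd z) * v z) - inverse q * ((kd y * em y z) * v z))"
      unfolding s1 s2 by (simp add: sum_subtractf sum_distrib_left)
    also have "\<dots> = (\<Sum>z\<in>?S. (q * (em y z * kd z) - inverse q * (kd y * em y z)) * v z)"
      by (rule sum.cong) (simp_all add: algebra_simps)
    also have "\<dots> = 0" by (simp add: rel_ek)
    finally show "q * E0 (K0 v) y - inverse q * K0 (E0 v) y = 0" .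
    have s3: "K0 (F0 v) y = (\<Sum>z\<in>?S. (kd y * fm y z) * v z)"
      unfolding F0_def K0_def mop_comp by (rule sum.cong) (simp_all add: ent_kf)
    have s4: "F0 (K0 v) y = (\<Sum>z\<in>?S. (fm y z * kd z) * v z)"
      unfolding F0_def K0_def mop_comp by (rule sum.cong) (simp_all add: ent_fk)
    have "q * K0 (F0 v) y - inverse q * F0 (K0 v) y =
          (\<Sum>z\<in>?S. q * ((kd y * fm y z) * v z) - inverse q * ((fm y z * kd z) * v z))"
      unfolding s3 s4 by (simp add: sum_subtractf sum_distrib_left)
    also have "\<dots> = (\<Sum>z\<in>?S. (q * (kd y * fm y z) - inverse q * (fm y z * kd z)) * v z)"
      by (rule sum.cong) (simp_all add: algebra_simps)
    also have "\<dots> = 0" by (simp add: rel_kf)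
    finally show "q * K0 (F0 v) y - inverse q * F0 (K0 v) y = 0" .
    define d where "d = q - inverse q"
    have s5: "E0 (F0 v) y = (\<Sum>z\<in>?S. (c1 * of_nat (card {x\<in>?S. (y \<in> ?S \<and> covered_by scale y x) \<and> (x \<in> ?S \<and> covered_by scale z x)})) * v z)"
      unfolding E0_def F0_def mop_comp by (rule sum.cong) (simp_all only: ent_ef)
    have s6: "F0 (E0 v) y = (\<Sum>z\<in>?S. (c1 * of_nat (card {x\<in>?S. (y \<in> ?S \<and> covered_by scale x y) \<and> (x \<in> ?S \<and> covered_by scale x z)})) * v z)"
      unfolding E0_def F0_def mop_comp by (rule sum.cong) (simp_all only: ent_fe)
    have "E0 (F0 v) y - F0 (E0 v) y =
       (\<Sum>z\<in>?S. (c1 * of_nat (card {x\<in>?S. (y \<in> ?S \<and> covered_by scale y x) \<and> (x \<in> ?S \<and> covered_by scale z x)})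
      - c1 * of_nat (card {x\<in>?S. (y \<in> ?S \<and> covered_by scale x y) \<and> (x \<in> ?S \<and> covered_by scale x z)})) * v z)"
      unfolding s5 s6 by (simp add: sum_subtractf[symmetric] left_diff_distrib)
    also have "\<dots> = (\<Sum>z\<in>?S. (km y z - kim y z) / d * v z)"
      unfolding d_def by (rule sum.cong) (simp_all only: rel_ef)
    also have "\<dots> = ((\<Sum>z\<in>?S. km y z * v z) - (\<Sum>z\<in>?S. kim y z * v z)) / d"
      by (simp add: sum_divide_distrib sum_subtractf[symmetric] left_diff_distrib)
    also have "\<dots> = (K0 v y - Ki0 v y) / (q - inverse q)"
      unfolding K0_def Ki0_def mop_def d_def ..
    finally show "E0 (F0 v) y - F0 (E0 v) y = (K0 v y - Ki0 v y) / (q - inverse q)" .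
  qed
  have delta: "(\<Sum>x'\<in>T. bvec x' y) = (if y \<in> T then 1 else 0)" if "finite T" for T and y :: "'v set"
  proof -
    have "(\<Sum>x'\<in>T. bvec x' y) = (\<Sum>x'\<in>T. if y = x' then 1 else 0)"
      by (rule sum.cong) (auto simp: bvec_def)
    then show ?thesis using that by simp
  qed
  have PE: "P E0 F0 K0 Ki0"
    unfolding P_def
  proof (intro conjI UqM ballI)
    fix x assume xS: "x \<in> ?S"
    show "E0 (bvec x) = (\<lambda>y. lam * inverse q ^ D *
            (\<Sum>x' \<in> {x'. x' \<in> ?S \<and> covered_by scale x' x}. bvec x' y))"
      unfolding E0_def mop_bvec[OF finS xS] by (rule ext) (simp add: delta em_def)
    show "F0 (bvec x) = (\<lambda>y. inverse lam * q *
            (\<Sum>x' \<in> {x'. x' \<in> ?S \<and> covered_by scale x x'}. bvec x' y))"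
      unfolding F0_def mop_bvec[OF finS xS] by (rule ext) (simp add: delta fm_def)
    show "K0 (bvec x) = (\<lambda>y. q powi (int D - 2 * int (vector_space.dim scale x)) * bvec x y)"
      unfolding K0_def mop_bvec[OF finS xS] by (rule ext) (simp add: km_def kd_def bvec_def)
    show "Ki0 (bvec x) = (\<lambda>y. q powi (- (int D - 2 * int (vector_space.dim scale x))) * bvec x y)"
      unfolding Ki0_def mop_bvec[OF finS xS] by (rule ext) (simp add: kim_def kid_def bvec_def)
  qed
  have uniq: "\<forall>E F K Ki E' F' K' Ki'. P E F K Ki \<longrightarrow> P E' F' K' Ki' \<longrightarrow>
            (\<forall>v \<in> CL scale. E v = E' v \<and> F v = F' v \<and> K v = K' v \<and> Ki v = Ki' v)"
  proof (intro allI impI ballI)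
    fix E F K Ki E' F' K' Ki' v
    assume p1: "P E F K Ki" and p2: "P E' F' K' Ki'" and v: "v \<in> CL scale"
    have l1: "lin_endo scale E" "lin_endo scale F" "lin_endo scale K" "lin_endo scale Ki"
      using p1 unfolding P_def Uq_module_def by auto
    have l2: "lin_endo scale E'" "lin_endo scale F'" "lin_endo scale K'" "lin_endo scale Ki'"
      using p2 unfolding P_def Uq_module_def by auto
    have b1: "\<forall>x\<in>?S. E (bvec x) = E' (bvec x) \<and> F (bvec x) = F' (bvec x) \<and>
                       K (bvec x) = K' (bvec x) \<and> Ki (bvec x) = Ki' (bvec x)"
      using p1 p2 unfolding P_def by auto
    show "E v = E' v \<and> F v = F' v \<and> K v = K' v \<and> Ki v = Ki' v"
      using uniq_lin[OF finS l1(1) l2(1) _ v] uniq_lin[OF finS l1(2) l2(2) _ v]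
            uniq_lin[OF finS l1(3) l2(3) _ v] uniq_lin[OF finS l1(4) l2(4) _ v] b1 by blast
  qed
show ?thesis using PE uniq by blast
qed

end
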